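(* Let $P(z) \in \mathbb{C}[z, z^{-1}]$ be a non-zero Laurent polynomial, possibly with repeated roots, and let $z_1,\dots,z_n$ be the distinct roots of $P$. For each positive integer $k$ let \[ m_k(P) = \int_0^1 \log^k \left| P\left(e^{2\pi i t}\right)\right| \, dt. \] Then \[ \lim_{k\to\infty} \frac{|m_k(P)|}{k!} = \frac{1}{\pi} \sum_{z_j \in S^1} \frac{1}{|P'(z_j)|}, \] where $S^1=\{z\in\mathbb{C}: |z|=1\}$, $P'$ is the derivative of $P$ with respect to $z$, the sum is over those distinct roots $z_j$ lying on $S^1$ (an empty sum being $0$), and the right-hand side is interpreted as $\infty$ if $P'(z_j)=0$ for some root $z_j \in S^1$ (i.e., if $P$ has a repeated root on $S^1$), in which case the limit on the left is $+\infty$.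
   Context: $m_k(P)$ is called the $k$-higher Mahler measure of $P$; $\log^k x$ means $(\log x)^k$. *)

theory Defs
  imports "HOL-Analysis.Analysis" "HOL-Computational_Algebra.Polynomial"
begin

text \<open>A Laurent polynomial in \<open>\<complex>[z, z\<inverse>]\<close> is represented as \<open>z powi e * Q(z)\<close>
  with \<open>Q\<close> an ordinary complex polynomial and \<open>e\<close> an integer shift.\<close>
definition laurent_eval :: "complex poly \<Rightarrow> int \<Rightarrow> complex \<Rightarrow> complex" where
  "laurent_eval Q e z = z powi e * poly Q z"

definition higher_mahler :: "nat \<Rightarrow> (complex \<Rightarrow> complex) \<Rightarrow> real" where
  "higher_mahler k P = integral {0..1} (\<lambda>t::real. (ln (cmod (P (cis (2 * pi * t))))) ^ k)"

end

theory Submission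
  imports Defs
begin


fun SS :: "nat \<Rightarrow> real \<Rightarrow> real" where
  "SS 0 y = 1"
| "SS (Suc k) y = y ^ Suc k + real (Suc k) * SS k y"

fun DS :: "nat \<Rightarrow> real \<Rightarrow> real" where
  "DS 0 y = 0"
| "DS (Suc k) y = real (Suc k) * y ^ k + real (Suc k) * DS k y"

lemma SS_deriv: "(SS k has_real_derivative DS k y) (at y)"
proof (induction k)
  case 0 then show ?case by simp
next
  case (Suc k)
  show ?case unfolding SS.simps DS.simps
    apply (rule derivative_eq_intros Suc refl)+
    by (cases k) (auto simp: algebra_simps)
qed

lemma SS_DS: "SS k y - DS k y = y ^ k"
  by (induction k) (auto simp: algebra_simps)

lemma SS_sum: "SS k y = fact k * (\<Sum>i\<le>k. y ^ i / fact i)"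
proof (induction k)
  case (Suc k)
  have "fact (Suc k) * (\<Sum>i\<le>Suc k. y ^ i / fact i) = fact (Suc k) * (y ^ Suc k / fact (Suc k)) + real (Suc k) * (fact k * (\<Sum>i\<le>k. y ^ i / fact i))"
    by (simp add: algebra_simps del: fact_Suc) (simp add: fact_Suc algebra_simps)
  also have "\<dots> = SS (Suc k) y" using Suc by simp
  finally show ?case ..
qed simp

lemma SS_exp_lim: "((\<lambda>y. SS k y / exp y) \<longlongrightarrow> 0) at_top"
proof (induction k)
  case 0 then show ?case 
    using tendsto_power_div_exp_0[of 0] by simp
next
  case (Suc k)
  have "((\<lambda>y. y ^ Suc k / exp y + real (Suc k) * (SS k y / exp y)) \<longlongrightarrow> 0 + real (Suc k) * 0) at_top"
    by (intro tendsto_intros tendsto_power_div_exp_0 Suc)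
  then show ?case by (simp add: add_divide_distrib)
qed

lemma neg_ln_at_right: 
  assumes "B > (0::real)"
  shows "filterlim (\<lambda>x. - ln (B * x)) at_top (at_right 0)"
proof -
  have "filterlim (\<lambda>x. B * x) (at_right 0) (at_right (0::real))"
  proof (rule tendsto_imp_filterlim_at_right)
    show "((\<lambda>x. B * x) \<longlongrightarrow> 0) (at_right 0)"
      by (rule tendsto_eq_intros refl)+ simp
    show "\<forall>\<^sub>F x in at_right 0. 0 < B * x" 
      by (rule eventually_mono[OF eventually_at_right_less]) (use assms in simp)
  qed
  then have "filterlim (\<lambda>x. ln (B * x)) at_bot (at_right 0)"
    by (rule filterlim_compose[OF ln_at_0])
  then show ?thesis by (simp add: filterlim_uminus_at_top)
qed

lemma near_integral0:
  assumes B: "B > 0" and d: "d > 0"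
  shows "((\<lambda>x. (- ln (B * x)) ^ k) has_integral (d * SS k (- ln (B * d)))) {0..d}"
proof -
  define G where "G x = x * SS k (- ln (B * x))" for x
  have cont: "continuous_on {0..d} G"
  proof (rule continuous_on_IccI)
    have ev: "\<forall>\<^sub>F x in at_right 0. SS k (- ln (B * x)) / exp (- ln (B * x)) / B = G x"
      by (rule eventually_mono[OF eventually_at_right_less]) (use B in \<open>simp add: G_def exp_minus field_simps\<close>)
    have "((\<lambda>x. SS k (- ln (B * x)) / exp (- ln (B * x)) / B) \<longlongrightarrow> 0 / B) (at_right 0)"
      by (intro tendsto_divide tendsto_const filterlim_compose[OF SS_exp_lim neg_ln_at_right[OF B]]) (use B in simp)
    then have "(G \<longlongrightarrow> 0) (at_right 0)" using tendsto_cong[OF ev] by simp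
    then show "(G \<longlongrightarrow> G 0) (at_right 0)" by (simp add: G_def)
    have "isCont G x" if "x > 0" for x
    proof -
      have "isCont (\<lambda>x. - ln (B*x)) x" using that B by (intro continuous_intros) auto
      from isCont_o2[OF this DERIV_isCont[OF SS_deriv]] show ?thesis
        unfolding G_def by (intro continuous_intros) auto
    qed
    then show "(G \<longlongrightarrow> G d) (at_left d)" using d
      by (simp add: isCont_def filterlim_at_split)
    show "G \<midarrow>x\<rightarrow> G x" if "0 < x" "x < d" for x
      using \<open>\<And>x. x > 0 \<Longrightarrow> isCont G x\<close> that by (simp add: isCont_def)
  qed (use d in simp)
  have der: "(G has_vector_derivative (- ln (B * x)) ^ k) (at x)" if "x \<in> {0<..<d}" for x
  proof -
    have x: "x > 0" using that by simp
    have "(G has_real_derivative (SS k (- ln (B * x)) + x * (DS k (- ln (B * x)) * (- (B / (B * x)))))) (at x)"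
      unfolding G_def
      by (rule derivative_eq_intros DERIV_chain2[OF SS_deriv] refl | use x B in simp)+
    also have "SS k (- ln (B * x)) + x * (DS k (- ln (B * x)) * (- (B / (B * x)))) = (- ln (B * x)) ^ k"
      using x B SS_DS[of k "- ln (B * x)"] by (simp add: field_simps)
    finally show ?thesis by (simp add: has_real_derivative_iff_has_vector_derivative)
  qed
  have "((\<lambda>x. (- ln (B * x)) ^ k) has_integral (G d - G 0)) {0..d}"
    by (rule fundamental_theorem_of_calculus_interior[OF _ cont der]) (use d in auto)
  then show ?thesis by (simp add: G_def)
qed

definition NI :: "real \<Rightarrow> real \<Rightarrow> nat \<Rightarrow> real" where
  "NI B d k = 2 * (d * SS k (- ln (B * d)))"

lemma near_integral:
  assumes B: "B > 0" and d: "d > 0"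
  shows "((\<lambda>x. (- ln (B * \<bar>x - t0\<bar>)) ^ k) has_integral NI B d k) {t0-d..t0+d}"
proof -
  let ?V = "d * SS k (- ln (B * d))"
  have r: "((\<lambda>x. (- ln (B * x)) ^ k) has_integral ?V) {0..d}" by (rule near_integral0[OF B d])
  have "((\<lambda>x. (- ln (B * (- x))) ^ k) has_integral ?V) {-d..0}"
    using r has_integral_reflect_real[where f="\<lambda>x. (- ln (B * x)) ^ k" and i= ?V and a=0 and b=d] by simp
  then have l: "((\<lambda>x. (- ln (B * \<bar>x\<bar>)) ^ k) has_integral ?V) {-d..0}"
    by (rule has_integral_eq[rotated]) auto
  have r': "((\<lambda>x. (- ln (B * \<bar>x\<bar>)) ^ k) has_integral ?V) {0..d}"
    using r by (rule has_integral_eq[rotated]) auto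
  have "((\<lambda>x. (- ln (B * \<bar>x\<bar>)) ^ k) has_integral (?V + ?V)) {-d..d}"
    by (rule has_integral_combine[OF _ _ l r']) (use d in auto)
  from has_integral_shift_real_ivl[OF this, of "-t0"]
  show ?thesis by (simp add: NI_def algebra_simps)
qed

lemma NI_lim:
  assumes B: "B > 0" and d: "d > 0"
  shows "(\<lambda>k. NI B d k / fact k) \<longlonglongrightarrow> 2 / B"
proof -
  let ?y = "- ln (B * d)"
  have "(\<lambda>k. \<Sum>i\<le>k. ?y ^ i / fact i) \<longlonglongrightarrow> exp ?y"
    using exp_converges[of ?y] by (simp add: sums_def_le divide_inverse mult.commute)
  then have "(\<lambda>k. 2 * d * (\<Sum>i\<le>k. ?y ^ i / fact i)) \<longlonglongrightarrow> 2 * d * exp ?y"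
    by (intro tendsto_intros)
  moreover have "2 * d * exp ?y = 2 / B" using B d by (simp add: exp_minus field_simps)
  moreover have "NI B d k / fact k = 2 * d * (\<Sum>i\<le>k. ?y ^ i / fact i)" for k
    by (simp add: NI_def SS_sum)
  ultimately show ?thesis by simp
qed

lemma periodic_integral:
  fixes f :: "real \<Rightarrow> real"
  assumes per: "\<And>x. f (x + 1) = f x" and int: "f integrable_on {s..s+1}" and s: "0 \<le> s" "s \<le> 1"
  shows "integral {0..1} f = integral {s..s+1} f"
proof -
  obtain I1 where I1: "(f has_integral I1) {s..1}"
    using integrable_subinterval_real[OF int, of s 1] s by auto
  obtain I2 where I2: "(f has_integral I2) {1..s+1}"
    using integrable_subinterval_real[OF int, of 1 "s+1"] s by auto
  have "((\<lambda>x. f (x + 1)) has_integral I2) {1-1..s+1-1}"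
    by (rule has_integral_shift_real_ivl[OF I2])
  then have I2': "(f has_integral I2) {0..s}" by (simp add: per)
  have "(f has_integral (I2 + I1)) {0..1}"
    by (rule has_integral_combine[OF _ _ I2' I1]) (use s in auto)
  moreover have "(f has_integral (I1 + I2)) {s..s+1}"
    by (rule has_integral_combine[OF _ _ I1 I2]) (use s in auto)
  ultimately show ?thesis by (simp add: integral_unique)
qed

lemma near_restrict:
  assumes B: "B > 0" and d: "d > 0" and sub: "s \<le> t - d" "t + d \<le> s'"
  shows "((\<lambda>x. if \<bar>x - t\<bar> \<le> d then (- ln (B * \<bar>x - t\<bar>)) ^ k else 0) has_integral NI B d k) {s..s'}"
proof -
  have e: "{t-d..t+d} \<inter> {s..s'} = {t-d..t+d}" using sub by auto
  have "((\<lambda>x. if x \<in> {t-d..t+d} then (- ln (B * \<bar>x - t\<bar>)) ^ k else 0) has_integral NI B d k) {s..s'}"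
    unfolding has_integral_restrict_Int e by (rule near_integral[OF B d])
  moreover have "x \<in> {t-d..t+d} \<longleftrightarrow> \<bar>x - t\<bar> \<le> d" for x by auto
  ultimately show ?thesis by simp
qed

locale core =
  fixes g :: "real \<Rightarrow> real" and s :: real and T :: "real set" and \<delta> :: real
    and b :: "real \<Rightarrow> real" and m :: "real \<Rightarrow> nat" and C :: real
  assumes g_nonneg: "\<And>x. g x \<ge> 0"
    and g_meas: "g \<in> borel_measurable (lebesgue_on {s..s+1})"
    and T_fin: "finite T"
    and \<delta>_pos: "\<delta> > 0"
    and T_inside: "\<And>t. t \<in> T \<Longrightarrow> s \<le> t - \<delta> \<and> t + \<delta> \<le> s + 1"
    and T_disj: "\<And>t t'. t \<in> T \<Longrightarrow> t' \<in> T \<Longrightarrow> t \<noteq> t' \<Longrightarrow> 2 * \<delta> < \<bar>t - t'\<bar>"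
    and g_T: "\<And>t. t \<in> T \<Longrightarrow> g t = 0"
    and b_pos: "\<And>t. t \<in> T \<Longrightarrow> b t > 0"
    and m_pos: "\<And>t. t \<in> T \<Longrightarrow> m t \<ge> 1"
    and near_lower: "\<And>t x. t \<in> T \<Longrightarrow> 0 < \<bar>x - t\<bar> \<Longrightarrow> \<bar>x - t\<bar> \<le> \<delta> \<Longrightarrow> b t * \<bar>x - t\<bar> ^ m t \<le> g x"
    and near_le1: "\<And>t x. t \<in> T \<Longrightarrow> \<bar>x - t\<bar> \<le> \<delta> \<Longrightarrow> g x \<le> 1"
    and C_nonneg: "C \<ge> 0"
    and far: "\<And>x. x \<in> {s..s+1} \<Longrightarrow> (\<forall>t\<in>T. \<delta> < \<bar>x - t\<bar>) \<Longrightarrow> \<bar>ln (g x)\<bar> \<le> C"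
begin


lemma other_far: "t \<in> T \<Longrightarrow> t' \<in> T \<Longrightarrow> t' \<noteq> t \<Longrightarrow> \<bar>x - t\<bar> \<le> \<delta> \<Longrightarrow> \<delta> < \<bar>x - t'\<bar>"
  using T_disj[of t t'] by auto

lemma h_meas: "(\<lambda>x. (- ln (g x)) ^ k) \<in> borel_measurable (lebesgue_on {s..s+1})"
  using g_meas by measurable

definition rb where "rb t = root (m t) (b t)"

lemma rb_pos: assumes t: "t \<in> T" shows "rb t > 0"
proof -
  have "m t > 0" using m_pos[OF t] by simp
  then show ?thesis unfolding rb_def by (rule real_root_gt_zero) (use b_pos t in auto)
qed

lemma rb_pow: assumes t: "t \<in> T" shows "rb t ^ m t = b t"
proof -
  have "m t > 0" using m_pos[OF t] by simp
  then show ?thesis unfolding rb_def by (rule real_root_pow_pos) (use b_pos t in auto)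
qed

definition Dom :: "nat \<Rightarrow> real \<Rightarrow> real" where
  "Dom k x = (\<Sum>t\<in>T. real (m t) ^ k * (if \<bar>x - t\<bar> \<le> \<delta> then (- ln (rb t * \<bar>x - t\<bar>)) ^ k else 0)) + C ^ k"

lemma Dom_int: "Dom k integrable_on {s..s+1}"
proof -
  have "(\<lambda>x. real (m t) ^ k * (if \<bar>x - t\<bar> \<le> \<delta> then (- ln (rb t * \<bar>x - t\<bar>)) ^ k else 0)) integrable_on {s..s+1}"
    if t: "t \<in> T" for t
  proof (rule integrable_on_mult_right)
    show "(\<lambda>x. if \<bar>x - t\<bar> \<le> \<delta> then (- ln (rb t * \<bar>x - t\<bar>)) ^ k else 0) integrable_on {s..s+1}"
      using near_restrict[OF rb_pos[OF t] \<delta>_pos, of s t "s+1" k] T_inside[OF t] by blast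
  qed
  then show ?thesis unfolding Dom_def
    by (intro integrable_add integrable_sum integrable_const_ivl) (auto simp: T_fin)
qed

lemma h_bound: 
  assumes x: "x \<in> {s..s+1}"
  shows "\<bar>(- ln (g x)) ^ k\<bar> \<le> Dom k x"
proof (cases "\<exists>t\<in>T. \<bar>x - t\<bar> \<le> \<delta>")
  case True
  then obtain t where t: "t \<in> T" "\<bar>x - t\<bar> \<le> \<delta>" by auto
  have others: "(\<Sum>t'\<in>T. real (m t') ^ k * (if \<bar>x - t'\<bar> \<le> \<delta> then (- ln (rb t' * \<bar>x - t'\<bar>)) ^ k else 0))
     = real (m t) ^ k * (- ln (rb t * \<bar>x - t\<bar>)) ^ k"
  proof -
    have "\<forall>t'\<in>T - {t}. real (m t') ^ k * (if \<bar>x - t'\<bar> \<le> \<delta> then (- ln (rb t' * \<bar>x - t'\<bar>)) ^ k else 0) = 0"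
      using other_far[OF t(1) _ _ t(2)] by force
    then show ?thesis 
      by (subst sum.remove[OF T_fin t(1)]) (use t in \<open>simp add: sum.neutral\<close>)
  qed
  have Ck: "C ^ k \<ge> 0" using C_nonneg by simp
  show ?thesis
  proof (cases "x = t")
    case True
    then show ?thesis using g_T[OF t(1)] Ck others 
      unfolding Dom_def by (cases k) auto
  next
    case False
    then have pos: "0 < \<bar>x - t\<bar>" by simp
    have lo: "b t * \<bar>x - t\<bar> ^ m t \<le> g x" by (rule near_lower[OF t(1) pos t(2)])
    have bpos: "b t * \<bar>x - t\<bar> ^ m t > 0" using b_pos[OF t(1)] pos by simp
    have gx1: "g x \<le> 1" by (rule near_le1[OF t])
    have "- ln (g x) \<le> - ln (b t * \<bar>x - t\<bar> ^ m t)" using lo bpos by simp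
    also have "b t * \<bar>x - t\<bar> ^ m t = (rb t * \<bar>x - t\<bar>) ^ m t"
      by (simp add: power_mult_distrib rb_pow[OF t(1)])
    also have "- ln ((rb t * \<bar>x - t\<bar>) ^ m t) = real (m t) * (- ln (rb t * \<bar>x - t\<bar>))"
      using rb_pos[OF t(1)] pos by (simp add: ln_realpow)
    finally have le: "- ln (g x) \<le> real (m t) * (- ln (rb t * \<bar>x - t\<bar>))" .
    have nn: "0 \<le> - ln (g x)" using gx1 bpos lo by simp
    have "\<bar>(- ln (g x)) ^ k\<bar> = (- ln (g x)) ^ k" using nn by (simp only: abs_of_nonneg zero_le_power)
    also have "\<dots> \<le> (real (m t) * (- ln (rb t * \<bar>x - t\<bar>))) ^ k" by (rule power_mono[OF le nn])
    also have "\<dots> = real (m t) ^ k * (- ln (rb t * \<bar>x - t\<bar>)) ^ k" by (simp only: power_mult_distrib)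
    finally show ?thesis unfolding Dom_def others using Ck by linarith
  qed
next
  case False
  then have fx: "\<forall>t\<in>T. \<delta> < \<bar>x - t\<bar>" by auto
  have z: "(\<Sum>t'\<in>T. real (m t') ^ k * (if \<bar>x - t'\<bar> \<le> \<delta> then (- ln (rb t' * \<bar>x - t'\<bar>)) ^ k else 0)) = 0"
    using fx by (auto intro!: sum.neutral)
  have "\<bar>(- ln (g x)) ^ k\<bar> = \<bar>ln (g x)\<bar> ^ k" by (simp add: power_abs)
  also have "\<dots> \<le> C ^ k" by (rule power_mono[OF far[OF x fx]]) simp
  finally show ?thesis unfolding Dom_def z by simp
qed

lemma h_int: "(\<lambda>x. (- ln (g x)) ^ k) integrable_on {s..s+1}"
  by (rule measurable_bounded_by_integrable_imp_integrable_real[OF h_meas Dom_int h_bound]) auto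

lemma sum_near:
  assumes "T'' \<subseteq> T" "t \<in> T''" "\<bar>x - t\<bar> \<le> \<delta>"
  shows "(\<Sum>t'\<in>T''. if \<bar>x - t'\<bar> \<le> \<delta> then f t' else 0) = (f t :: real)"
proof -
  have fin: "finite T''" using assms(1) T_fin finite_subset by blast
  have "\<forall>t'\<in>T'' - {t}. (if \<bar>x - t'\<bar> \<le> \<delta> then f t' else 0) = 0"
    using other_far[of t _ x] assms by force
  then show ?thesis
    by (subst sum.remove[OF fin assms(2)]) (use assms in \<open>simp add: sum.neutral\<close>)
qed

lemma sum_far:
  assumes "\<forall>t\<in>T''. \<not> \<bar>x - t\<bar> \<le> \<delta>"
  shows "(\<Sum>t'\<in>T''. if \<bar>x - t'\<bar> \<le> \<delta> then f t' else 0) = (0::real)"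
  using assms by (auto intro!: sum.neutral)

lemma h_far_bound:
  assumes x: "x \<in> {s..s+1}" and fx: "\<forall>t\<in>T. \<delta> < \<bar>x - t\<bar>"
  shows "\<bar>(- ln (g x)) ^ k\<bar> \<le> C ^ k"
proof -
  have "\<bar>(- ln (g x)) ^ k\<bar> = \<bar>ln (g x)\<bar> ^ k" by (simp add: power_abs)
  also have "\<dots> \<le> C ^ k" by (rule power_mono[OF far[OF x fx]]) simp
  finally show ?thesis .
qed

lemma J_lower:
  assumes T': "T' \<subseteq> T" and c: "\<And>t. t \<in> T' \<Longrightarrow> c t > 0" "\<And>t. t \<in> T' \<Longrightarrow> c t * \<delta> \<le> 1"
    and up: "\<And>t x. t \<in> T' \<Longrightarrow> 0 < \<bar>x - t\<bar> \<Longrightarrow> \<bar>x - t\<bar> \<le> \<delta> \<Longrightarrow> g x \<le> c t * \<bar>x - t\<bar>"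
  shows "(\<Sum>t\<in>T'. NI (c t) \<delta> k) - C ^ k \<le> integral {s..s+1} (\<lambda>x. (- ln (g x)) ^ k)"
proof -
  have fin: "finite T'" using T' T_fin finite_subset by blast
  define Lo where "Lo x = (\<Sum>t\<in>T'. if \<bar>x - t\<bar> \<le> \<delta> then (- ln (c t * \<bar>x - t\<bar>)) ^ k else 0) - C ^ k" for x
  have "(Lo has_integral ((\<Sum>t\<in>T'. NI (c t) \<delta> k) - C ^ k)) {s..s+1}"
  proof -
    have "((\<lambda>x. \<Sum>t\<in>T'. if \<bar>x - t\<bar> \<le> \<delta> then (- ln (c t * \<bar>x - t\<bar>)) ^ k else 0) has_integral (\<Sum>t\<in>T'. NI (c t) \<delta> k)) {s..s+1}"
      by (rule has_integral_sum[OF fin]) (use near_restrict c(1) \<delta>_pos T_inside T' in blast)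
    from has_integral_diff[OF this has_integral_const_real[of "C ^ k" s "s+1"]]
    show ?thesis unfolding Lo_def by simp
  qed
  then have "integral {s..s+1} Lo = (\<Sum>t\<in>T'. NI (c t) \<delta> k) - C ^ k" and Loi: "Lo integrable_on {s..s+1}"
    by (auto simp: integral_unique)
  moreover have "integral {s..s+1} Lo \<le> integral {s..s+1} (\<lambda>x. (- ln (g x)) ^ k)"
  proof (rule integral_le[OF Loi h_int])
    fix x assume x: "x \<in> {s..s+1}"
    have Ck: "C ^ k \<ge> 0" using C_nonneg by simp
    show "Lo x \<le> (- ln (g x)) ^ k"
    proof (cases "\<exists>t\<in>T'. \<bar>x - t\<bar> \<le> \<delta>")
      case True
      then obtain t where t: "t \<in> T'" "\<bar>x - t\<bar> \<le> \<delta>" by auto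
      have tT: "t \<in> T" using t T' by auto
      have Lx: "Lo x = (- ln (c t * \<bar>x - t\<bar>)) ^ k - C ^ k"
        unfolding Lo_def by (subst sum_near[OF T' t]) simp
      have "(- ln (c t * \<bar>x - t\<bar>)) ^ k \<le> (- ln (g x)) ^ k"
      proof (cases "x = t")
        case True then show ?thesis using g_T[OF tT] by simp
      next
        case False
        then have pos: "0 < \<bar>x - t\<bar>" by simp
        have gp: "g x > 0" using near_lower[OF tT pos t(2)] b_pos[OF tT] pos
          by (smt (verit) mult_pos_pos zero_less_power)
        have gu: "g x \<le> c t * \<bar>x - t\<bar>" by (rule up[OF t(1) pos t(2)])
        have c1: "c t * \<bar>x - t\<bar> \<le> 1" using c(2)[OF t(1)] c(1)[OF t(1)] t(2)
          by (smt (verit) mult_left_mono)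
        have nn: "0 \<le> - ln (c t * \<bar>x - t\<bar>)" using c1 c(1)[OF t(1)] pos by simp
        have "- ln (c t * \<bar>x - t\<bar>) \<le> - ln (g x)" using gp gu by simp
        then show ?thesis by (rule power_mono[OF _ nn])
      qed
      then show ?thesis using Lx Ck by linarith
    next
      case False
      then have Lx: "Lo x = -(C ^ k)" unfolding Lo_def by (subst sum_far) auto
      show ?thesis
      proof (cases "\<exists>t\<in>T. \<bar>x - t\<bar> \<le> \<delta>")
        case True
        then obtain t where t: "t \<in> T" "\<bar>x - t\<bar> \<le> \<delta>" by auto
        have "g x \<le> 1" by (rule near_le1[OF t])
        then have "0 \<le> - ln (g x)" using g_nonneg[of x] by (cases "g x = 0") auto
        then have "0 \<le> (- ln (g x)) ^ k" by simp
        then show ?thesis using Lx Ck by linarith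
      next
        case False
        then have "\<forall>t\<in>T. \<delta> < \<bar>x - t\<bar>" by auto
        from h_far_bound[OF x this, of k] show ?thesis using Lx by linarith
      qed
    qed
  qed
  ultimately show ?thesis by simp
qed

lemma J_upper:
  assumes m1: "\<And>t. t \<in> T \<Longrightarrow> m t = 1"
  shows "integral {s..s+1} (\<lambda>x. (- ln (g x)) ^ k) \<le> (\<Sum>t\<in>T. NI (b t) \<delta> k) + C ^ k"
proof -
  define Upr where "Upr x = (\<Sum>t\<in>T. if \<bar>x - t\<bar> \<le> \<delta> then (- ln (b t * \<bar>x - t\<bar>)) ^ k else 0) + C ^ k" for x
  have "(Upr has_integral ((\<Sum>t\<in>T. NI (b t) \<delta> k) + C ^ k)) {s..s+1}"
  proof -
    have "((\<lambda>x. \<Sum>t\<in>T. if \<bar>x - t\<bar> \<le> \<delta> then (- ln (b t * \<bar>x - t\<bar>)) ^ k else 0) has_integral (\<Sum>t\<in>T. NI (b t) \<delta> k)) {s..s+1}"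
      by (rule has_integral_sum[OF T_fin]) (use near_restrict b_pos \<delta>_pos T_inside in blast)
    from has_integral_add[OF this has_integral_const_real[of "C ^ k" s "s+1"]]
    show ?thesis unfolding Upr_def by simp
  qed
  then have "integral {s..s+1} Upr = (\<Sum>t\<in>T. NI (b t) \<delta> k) + C ^ k" and Upri: "Upr integrable_on {s..s+1}"
    by (auto simp: integral_unique)
  moreover have "integral {s..s+1} (\<lambda>x. (- ln (g x)) ^ k) \<le> integral {s..s+1} Upr"
  proof (rule integral_le[OF h_int Upri])
    fix x assume x: "x \<in> {s..s+1}"
    have Ck: "C ^ k \<ge> 0" using C_nonneg by simp
    show "(- ln (g x)) ^ k \<le> Upr x"
    proof (cases "\<exists>t\<in>T. \<bar>x - t\<bar> \<le> \<delta>")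
      case True
      then obtain t where t: "t \<in> T" "\<bar>x - t\<bar> \<le> \<delta>" by auto
      have Ux: "Upr x = (- ln (b t * \<bar>x - t\<bar>)) ^ k + C ^ k"
        unfolding Upr_def by (subst sum_near[OF _ t]) simp_all
      have "(- ln (g x)) ^ k \<le> (- ln (b t * \<bar>x - t\<bar>)) ^ k"
      proof (cases "x = t")
        case True then show ?thesis using g_T[OF t(1)] by simp
      next
        case False
        then have pos: "0 < \<bar>x - t\<bar>" by simp
        have gl: "b t * \<bar>x - t\<bar> \<le> g x" using near_lower[OF t(1) pos t(2)] m1[OF t(1)] by simp
        have bp: "b t * \<bar>x - t\<bar> > 0" using b_pos[OF t(1)] pos by simp
        have "g x \<le> 1" by (rule near_le1[OF t])
        then have nn: "0 \<le> - ln (g x)" using gl bp by simp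
        have "- ln (g x) \<le> - ln (b t * \<bar>x - t\<bar>)" using gl bp by simp
        then show ?thesis by (rule power_mono[OF _ nn])
      qed
      then show ?thesis using Ux Ck by linarith
    next
      case False
      then have Ux: "Upr x = C ^ k" unfolding Upr_def by (subst sum_far) auto
      from False have "\<forall>t\<in>T. \<delta> < \<bar>x - t\<bar>" by auto
      from h_far_bound[OF x this, of k] show ?thesis using Ux by linarith
    qed
  qed
  ultimately show ?thesis by simp
qed

end



lemma choose_delta:
  fixes P :: "real \<Rightarrow> real \<Rightarrow> bool" and T :: "real set"
  assumes fin: "finite T" and ev: "\<And>t. t \<in> T \<Longrightarrow> eventually (P t) (at t)"
    and inside: "\<And>t. t \<in> T \<Longrightarrow> a < t \<and> t < c" and e: "\<And>t. t \<in> T \<Longrightarrow> e t > 0"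
  shows "\<exists>\<delta>>0. (\<forall>t\<in>T. a \<le> t - \<delta> \<and> t + \<delta> \<le> c) \<and> (\<forall>t\<in>T. \<forall>t'\<in>T. t \<noteq> t' \<longrightarrow> 2 * \<delta> < \<bar>t - t'\<bar>)
     \<and> (\<forall>t\<in>T. \<delta> \<le> e t) \<and> (\<forall>t\<in>T. \<forall>x. 0 < \<bar>x - t\<bar> \<and> \<bar>x - t\<bar> \<le> \<delta> \<longrightarrow> P t x)"
proof -
  have small: "eventually (\<lambda>\<delta>::real. \<delta> < d) (at_right 0)" if "d > 0" for d
    using order_tendstoD(2)[OF tendsto_ident_at[of 0 "{0<..}"] that] by simp
  have e1: "eventually (\<lambda>\<delta>. \<forall>t\<in>T. a \<le> t - \<delta> \<and> t + \<delta> \<le> c) (at_right 0)"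
  proof (rule eventually_ball_finite[OF fin], rule ballI)
    fix t assume t: "t \<in> T"
    have "eventually (\<lambda>\<delta>. \<delta> < min (t - a) (c - t)) (at_right 0)"
      by (rule small) (use inside[OF t] in simp)
    then show "eventually (\<lambda>\<delta>. a \<le> t - \<delta> \<and> t + \<delta> \<le> c) (at_right 0)"
      by eventually_elim auto
  qed
  have e2: "eventually (\<lambda>\<delta>. \<forall>t\<in>T. \<forall>t'\<in>T. t \<noteq> t' \<longrightarrow> 2 * \<delta> < \<bar>t - t'\<bar>) (at_right 0)"
  proof (rule eventually_ball_finite[OF fin], rule ballI, rule eventually_ball_finite[OF fin], rule ballI)
    fix t t' assume t: "t \<in> T" "t' \<in> T"
    show "eventually (\<lambda>\<delta>. t \<noteq> t' \<longrightarrow> 2 * \<delta> < \<bar>t - t'\<bar>) (at_right 0)"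
    proof (cases "t = t'")
      case False
      then have "eventually (\<lambda>\<delta>. \<delta> < \<bar>t - t'\<bar> / 2) (at_right 0)" by (intro small) simp
      then show ?thesis by eventually_elim auto
    qed simp
  qed
  have e3: "eventually (\<lambda>\<delta>. \<forall>t\<in>T. \<delta> \<le> e t) (at_right 0)"
  proof (rule eventually_ball_finite[OF fin], rule ballI)
    fix t assume t: "t \<in> T"
    show "eventually (\<lambda>\<delta>. \<delta> \<le> e t) (at_right 0)"
      using small[OF e[OF t]] by eventually_elim simp
  qed
  have e4: "eventually (\<lambda>\<delta>. \<forall>t\<in>T. \<forall>x. 0 < \<bar>x - t\<bar> \<and> \<bar>x - t\<bar> \<le> \<delta> \<longrightarrow> P t x) (at_right 0)"
  proof (rule eventually_ball_finite[OF fin], rule ballI)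
    fix t assume t: "t \<in> T"
    obtain d where d: "d > 0" "\<And>x. x \<noteq> t \<Longrightarrow> dist x t < d \<Longrightarrow> P t x"
      using ev[OF t] unfolding eventually_at by auto
    show "eventually (\<lambda>\<delta>. \<forall>x. 0 < \<bar>x - t\<bar> \<and> \<bar>x - t\<bar> \<le> \<delta> \<longrightarrow> P t x) (at_right 0)"
      using small[OF d(1)] by eventually_elim (auto intro!: d(2) simp: dist_real_def)
  qed
  have "eventually (\<lambda>\<delta>. \<delta> > 0 \<and> (\<forall>t\<in>T. a \<le> t - \<delta> \<and> t + \<delta> \<le> c) \<and> (\<forall>t\<in>T. \<forall>t'\<in>T. t \<noteq> t' \<longrightarrow> 2 * \<delta> < \<bar>t - t'\<bar>)
     \<and> (\<forall>t\<in>T. \<delta> \<le> e t) \<and> (\<forall>t\<in>T. \<forall>x. 0 < \<bar>x - t\<bar> \<and> \<bar>x - t\<bar> \<le> \<delta> \<longrightarrow> P t x)) (at_right 0)"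
    using eventually_at_right_less[of 0] e1 e2 e3 e4 by eventually_elim auto
  from eventually_happens'[OF _ this] show ?thesis by auto
qed

lemma far_bound:
  fixes g :: "real \<Rightarrow> real"
  assumes cont: "continuous_on {s..s'} g" and pos: "\<And>x. x \<in> {s..s'} \<Longrightarrow> x \<notin> T \<Longrightarrow> g x > 0"
    and fin: "finite T" and d: "\<delta> > 0"
  shows "\<exists>C\<ge>0. \<forall>x\<in>{s..s'}. (\<forall>t\<in>T. \<delta> < \<bar>x - t\<bar>) \<longrightarrow> \<bar>ln (g x)\<bar> \<le> C"
proof -
  define F where "F = {s..s'} \<inter> (\<Inter>t\<in>T. {x. \<delta> \<le> \<bar>x - t\<bar>})"
  have "closed (\<Inter>t\<in>T. {x. \<delta> \<le> \<bar>x - t\<bar>})"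
    by (intro closed_INT ballI closed_Collect_le continuous_intros)
  then have cF: "compact F" unfolding F_def by (intro compact_Int_closed) auto
  have FT: "x \<in> F \<Longrightarrow> x \<notin> T" for x using d unfolding F_def by force
  have sub: "F \<subseteq> {s..s'}" unfolding F_def by blast
  have nz: "\<forall>x\<in>F. g x \<noteq> 0"
  proof
    fix x assume x: "x \<in> F"
    have "g x > 0" by (rule pos) (use x sub FT in auto)
    then show "g x \<noteq> 0" by simp
  qed
  have "continuous_on F (\<lambda>x. ln (g x))"
    by (rule continuous_on_ln[OF continuous_on_subset[OF cont sub] nz])
  then have "bounded ((\<lambda>x. ln (g x)) ` F)" by (intro compact_imp_bounded compact_continuous_image cF)
  then obtain C where C: "\<forall>y\<in>(\<lambda>x. ln (g x)) ` F. \<bar>y\<bar> \<le> C" unfolding bounded_real by blast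
  show ?thesis
  proof (intro exI[of _ "max C 0"] conjI ballI impI)
    fix x assume "x \<in> {s..s'}" "\<forall>t\<in>T. \<delta> < \<bar>x - t\<bar>"
    then have "x \<in> F" unfolding F_def by force
    then show "\<bar>ln (g x)\<bar> \<le> max C 0" using C by force
  qed simp
qed

lemma pow_fact_lim: "(\<lambda>k. C ^ k / fact k :: real) \<longlonglongrightarrow> 0"
  using summable_LIMSEQ_zero[OF summable_exp_generic[of C]] by (simp add: divide_inverse mult.commute)

lemma ratio_lim:
  fixes \<phi> :: "real \<Rightarrow> complex"
  assumes der: "(\<phi> has_vector_derivative D) (at t)" and z: "\<phi> t = 0"
  shows "((\<lambda>x. cmod (\<phi> x) / \<bar>x - t\<bar>) \<longlongrightarrow> cmod D) (at t)"
proof -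
  have "((\<lambda>y. norm ((\<phi> y - \<phi> t) - (y - t) *\<^sub>R D) / norm (y - t)) \<longlongrightarrow> 0) (at t)"
    using der unfolding has_vector_derivative_def has_derivative_iff_norm by blast
  then have lim0: "((\<lambda>y. cmod (\<phi> y - (y - t) *\<^sub>R D) / \<bar>y - t\<bar>) \<longlongrightarrow> 0) (at t)" using z by simp
  have "((\<lambda>x. cmod (\<phi> x) / \<bar>x - t\<bar> - cmod D) \<longlongrightarrow> 0) (at t)"
  proof (rule Lim_null_comparison[OF _ lim0])
    show "\<forall>\<^sub>F x in at t. norm (cmod (\<phi> x) / \<bar>x - t\<bar> - cmod D) \<le> cmod (\<phi> x - (x - t) *\<^sub>R D) / \<bar>x - t\<bar>"
    proof -
      have "norm (cmod (\<phi> x) / \<bar>x - t\<bar> - cmod D) \<le> cmod (\<phi> x - (x - t) *\<^sub>R D) / \<bar>x - t\<bar>"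
        if "x \<noteq> t" for x
      proof -
        from that have p: "\<bar>x - t\<bar> > 0" by simp
        have ns: "cmod ((x - t) *\<^sub>R D) = \<bar>x - t\<bar> * cmod D" by (rule norm_scaleR)
        have "cmod (\<phi> x) / \<bar>x - t\<bar> - cmod D = (cmod (\<phi> x) - cmod ((x - t) *\<^sub>R D)) / \<bar>x - t\<bar>"
          unfolding ns using p by (simp add: field_simps)
        also have "\<bar>\<dots>\<bar> = \<bar>cmod (\<phi> x) - cmod ((x - t) *\<^sub>R D)\<bar> / \<bar>x - t\<bar>" using p by simp
        also have "\<dots> \<le> cmod (\<phi> x - (x - t) *\<^sub>R D) / \<bar>x - t\<bar>"
          by (rule divide_right_mono[OF norm_triangle_ineq3]) simp
        finally show ?thesis by simp
      qed
      then show ?thesis unfolding eventually_at by (intro exI[of _ 1]) auto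
    qed
  qed
  then show ?thesis by (simp add: LIM_zero_iff)
qed




lemma squeeze_eps:
  fixes X :: "nat \<Rightarrow> real"
  assumes L: "L \<ge> 0"
    and H: "\<And>\<epsilon>. 0 < \<epsilon> \<Longrightarrow> \<epsilon> < 1 \<Longrightarrow> \<exists>lo up. lo \<longlonglongrightarrow> L / (1 + \<epsilon>) \<and> up \<longlonglongrightarrow> L / (1 - \<epsilon>) \<and> (\<forall>k. lo k \<le> X k \<and> X k \<le> up k)"
  shows "X \<longlonglongrightarrow> L"
proof (rule tendstoI)
  fix r :: real assume r: "r > 0"
  define \<epsilon> where "\<epsilon> = min (1/2) (r / (4 * (L + 1)))"
  have e0: "\<epsilon> > 0" using r L by (simp add: \<epsilon>_def)
  have e1: "\<epsilon> \<le> 1/2" unfolding \<epsilon>_def by (rule min.cobounded1)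
  have e2': "\<epsilon> \<le> r / (4 * (L + 1))" unfolding \<epsilon>_def by (rule min.cobounded2)
  have e2: "\<epsilon> * (4 * (L + 1)) \<le> r" using e2' L by (simp add: pos_le_divide_eq)
  obtain lo up where lu: "lo \<longlonglongrightarrow> L / (1 + \<epsilon>)" "up \<longlonglongrightarrow> L / (1 - \<epsilon>)" "\<And>k. lo k \<le> X k \<and> X k \<le> up k"
    using H[OF e0] e1 by auto
  have a1: "L / (1 - \<epsilon>) < L + r"
  proof -
    have "L / (1 - \<epsilon>) = L + L * \<epsilon> / (1 - \<epsilon>)" using e1 by (simp add: field_simps)
    also have "L * \<epsilon> / (1 - \<epsilon>) \<le> 2 * (L * \<epsilon>)"
    proof -
      have p: "0 \<le> L * \<epsilon> * (1 - 2 * \<epsilon>)" using L e0 e1 by simp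
      then have "L * \<epsilon> \<le> 2 * (L * \<epsilon>) * (1 - \<epsilon>)" by (simp add: algebra_simps)
      then show ?thesis using e1 by (simp add: pos_divide_le_eq)
    qed
    finally have "L / (1 - \<epsilon>) \<le> L + 2 * (L * \<epsilon>)" by simp
    moreover have "\<epsilon> * (4 * (L + 1)) = 4 * (L * \<epsilon>) + 4 * \<epsilon>" by (simp add: algebra_simps)
    moreover have "0 \<le> L * \<epsilon>" using L e0 by simp
    ultimately show ?thesis using e2 e0 by linarith
  qed
  have a2: "L - r < L / (1 + \<epsilon>)"
  proof -
    have q1: "L / (1 + \<epsilon>) = L - L * \<epsilon> / (1 + \<epsilon>)" using e0 by (simp add: field_simps)
    have q2: "L * \<epsilon> / (1 + \<epsilon>) \<le> L * \<epsilon>" using e0 L by (simp add: field_simps)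
    from q1 q2 have "L - L * \<epsilon> \<le> L / (1 + \<epsilon>)" by linarith
    moreover have "\<epsilon> * (4 * (L + 1)) = 4 * (L * \<epsilon>) + 4 * \<epsilon>" by (simp add: algebra_simps)
    moreover have "0 \<le> L * \<epsilon>" using L e0 by simp
    ultimately show ?thesis using e2 e0 by linarith
  qed
  have "eventually (\<lambda>k. up k < L + r) sequentially" by (rule order_tendstoD(2)[OF lu(2) a1])
  moreover have "eventually (\<lambda>k. L - r < lo k) sequentially" by (rule order_tendstoD(1)[OF lu(1) a2])
  ultimately show "eventually (\<lambda>k. dist (X k) L < r) sequentially"
  proof eventually_elim
    case (elim k)
    then show ?case using lu(3)[of k] by (auto simp: dist_real_def abs_less_iff)
  qed
qed

locale absdata =
  fixes g :: "real \<Rightarrow> real" and s :: real and T :: "real set" and A b :: "real \<Rightarrow> real" and m :: "real \<Rightarrow> nat"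
  assumes cont: "continuous_on UNIV g" and nonneg: "\<And>x. g x \<ge> 0"
    and fin: "finite T" and Tin: "\<And>t. t \<in> T \<Longrightarrow> s < t \<and> t < s + 1"
    and zeros: "\<And>x. x \<in> {s..s+1} \<Longrightarrow> g x = 0 \<longleftrightarrow> x \<in> T"
    and mb: "\<And>t. t \<in> T \<Longrightarrow> m t \<ge> 1 \<and> b t > 0"
    and lowev: "\<And>t. t \<in> T \<Longrightarrow> eventually (\<lambda>x. b t * \<bar>x - t\<bar> ^ m t \<le> g x) (at t)"
    and ratio: "\<And>t. t \<in> T \<Longrightarrow> ((\<lambda>x. g x / \<bar>x - t\<bar>) \<longlongrightarrow> A t) (at t)"
begin

lemma gT: "t \<in> T \<Longrightarrow> g t = 0"
  using zeros[of t] Tin[of t] by auto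

lemma gpos: "x \<in> {s..s+1} \<Longrightarrow> x \<notin> T \<Longrightarrow> g x > 0"
  using zeros[of x] nonneg[of x] by auto

lemma g_meas: "g \<in> borel_measurable (lebesgue_on {s..s+1})"
  by (rule continuous_imp_measurable_on_sets_lebesgue[OF continuous_on_subset[OF cont]]) auto

lemma ev_le1: "t \<in> T \<Longrightarrow> eventually (\<lambda>x. g x \<le> 1) (at t)"
proof -
  assume t: "t \<in> T"
  have "isCont g t" using cont by (simp add: continuous_on_eq_continuous_at)
  then have "(g \<longlongrightarrow> 0) (at t)" using gT[OF t] by (simp add: isCont_def)
  then have "eventually (\<lambda>x. g x < 1) (at t)" by (rule order_tendstoD(2)) simp
  then show ?thesis by eventually_elim simp
qed

lemma A_nonneg: "t \<in> T \<Longrightarrow> A t \<ge> 0"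
  by (rule tendsto_lowerbound[OF ratio]) (auto simp: nonneg)

lemma make_core:
  assumes d: "\<delta> > 0" "\<forall>t\<in>T. s \<le> t - \<delta> \<and> t + \<delta> \<le> s + 1" "\<forall>t\<in>T. \<forall>t'\<in>T. t \<noteq> t' \<longrightarrow> 2 * \<delta> < \<bar>t - t'\<bar>"
    and bm: "\<And>t. t \<in> T \<Longrightarrow> b' t > 0 \<and> m' t \<ge> 1"
    and lo: "\<And>t x. t \<in> T \<Longrightarrow> 0 < \<bar>x - t\<bar> \<Longrightarrow> \<bar>x - t\<bar> \<le> \<delta> \<Longrightarrow> b' t * \<bar>x - t\<bar> ^ m' t \<le> g x \<and> g x \<le> 1"
  shows "\<exists>C. core g s T \<delta> b' m' C"
proof -
  obtain C where C: "C \<ge> 0" "\<forall>x\<in>{s..s+1}. (\<forall>t\<in>T. \<delta> < \<bar>x - t\<bar>) \<longrightarrow> \<bar>ln (g x)\<bar> \<le> C"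
    using far_bound[OF continuous_on_subset[OF cont] gpos fin d(1)] by blast
  have "core g s T \<delta> b' m' C"
  proof
    show "\<And>t x. t \<in> T \<Longrightarrow> \<bar>x - t\<bar> \<le> \<delta> \<Longrightarrow> g x \<le> 1"
    proof -
      fix t x assume t: "t \<in> T" "\<bar>x - t\<bar> \<le> \<delta>"
      show "g x \<le> 1" using lo[OF t(1) _ t(2)] gT[OF t(1)] by (cases "x = t") auto
    qed
  qed (use nonneg g_meas fin d gT bm lo C in auto)
  then show ?thesis by blast
qed

lemma integrable: "(\<lambda>x. (- ln (g x)) ^ k) integrable_on {s..s+1}"
proof -
  have "\<forall>t\<in>T. eventually (\<lambda>x. b t * \<bar>x - t\<bar> ^ m t \<le> g x \<and> g x \<le> 1) (at t)"
    using lowev ev_le1 by (auto intro: eventually_conj)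
  then obtain \<delta> where d: "\<delta> > 0" "\<forall>t\<in>T. s \<le> t - \<delta> \<and> t + \<delta> \<le> s + 1" "\<forall>t\<in>T. \<forall>t'\<in>T. t \<noteq> t' \<longrightarrow> 2 * \<delta> < \<bar>t - t'\<bar>"
    "\<forall>t\<in>T. \<forall>x. 0 < \<bar>x - t\<bar> \<and> \<bar>x - t\<bar> \<le> \<delta> \<longrightarrow> b t * \<bar>x - t\<bar> ^ m t \<le> g x \<and> g x \<le> 1"
    using choose_delta[OF fin, of "\<lambda>t x. b t * \<bar>x - t\<bar> ^ m t \<le> g x \<and> g x \<le> 1" s "s+1" "\<lambda>_. 1"] Tin
    by auto
  obtain C where "core g s T \<delta> b m C"
    using make_core[OF d(1-3), of b m] mb d(4) by auto
  then show ?thesis by (rule core.h_int)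
qed

lemma conv:
  assumes Apos: "\<And>t. t \<in> T \<Longrightarrow> A t > 0"
  shows "(\<lambda>k. integral {s..s+1} (\<lambda>x. (- ln (g x)) ^ k) / fact k) \<longlonglongrightarrow> (\<Sum>t\<in>T. 2 / A t)"
proof (rule squeeze_eps)
  show "(\<Sum>t\<in>T. 2 / A t) \<ge> 0" using Apos by (intro sum_nonneg) (simp add: less_imp_le)
  fix \<epsilon> :: real assume e: "0 < \<epsilon>" "\<epsilon> < 1"
  define P where "P t x = (g x \<le> 1 \<and> \<bar>g x / \<bar>x - t\<bar> - A t\<bar> < \<epsilon> * A t)" for t x
  have evP: "eventually (P t) (at t)" if t: "t \<in> T" for t
  proof -
    have "eventually (\<lambda>x. dist (g x / \<bar>x - t\<bar>) (A t) < \<epsilon> * A t) (at t)"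
      using ratio[OF t] e Apos[OF t] by (auto simp: tendsto_iff)
    with ev_le1[OF t] show ?thesis unfolding P_def by eventually_elim (auto simp: dist_real_def)
  qed
  obtain \<delta> where d: "\<delta> > 0" "\<forall>t\<in>T. s \<le> t - \<delta> \<and> t + \<delta> \<le> s + 1" "\<forall>t\<in>T. \<forall>t'\<in>T. t \<noteq> t' \<longrightarrow> 2 * \<delta> < \<bar>t - t'\<bar>"
    "\<forall>t\<in>T. \<delta> \<le> 1 / ((1 + \<epsilon>) * A t)"
    "\<forall>t\<in>T. \<forall>x. 0 < \<bar>x - t\<bar> \<and> \<bar>x - t\<bar> \<le> \<delta> \<longrightarrow> P t x"
    using choose_delta[OF fin evP, of s "s+1" "\<lambda>t. 1 / ((1 + \<epsilon>) * A t)"] Tin Apos e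
    by (auto simp: add_pos_pos)
  have bounds: "(1 - \<epsilon>) * A t * \<bar>x - t\<bar> \<le> g x \<and> g x \<le> (1 + \<epsilon>) * A t * \<bar>x - t\<bar> \<and> g x \<le> 1"
    if t: "t \<in> T" and x: "0 < \<bar>x - t\<bar>" "\<bar>x - t\<bar> \<le> \<delta>" for t x
  proof -
    have p: "P t x" using d(5) t x by auto
    then have r: "\<bar>g x / \<bar>x - t\<bar> - A t\<bar> < \<epsilon> * A t" and g1: "g x \<le> 1" unfolding P_def by auto
    from r have r1: "(1 - \<epsilon>) * A t < g x / \<bar>x - t\<bar>" and r2: "g x / \<bar>x - t\<bar> < (1 + \<epsilon>) * A t"
      by (auto simp: abs_less_iff algebra_simps)
    from r1 x(1) have "(1 - \<epsilon>) * A t * \<bar>x - t\<bar> < g x" by (simp add: pos_less_divide_eq)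
    moreover from r2 x(1) have "g x < (1 + \<epsilon>) * A t * \<bar>x - t\<bar>" by (simp add: pos_divide_less_eq)
    ultimately show ?thesis using g1 by simp
  qed
  obtain C where "core g s T \<delta> (\<lambda>t. (1 - \<epsilon>) * A t) (\<lambda>_. 1) C"
    using make_core[OF d(1-3), of "\<lambda>t. (1 - \<epsilon>) * A t" "\<lambda>_. 1"] bounds Apos e by auto
  then interpret core g s T \<delta> "\<lambda>t. (1 - \<epsilon>) * A t" "\<lambda>_. 1" C .
  define J where "J k = integral {s..s+1} (\<lambda>x. (- ln (g x)) ^ k)" for k
  have up: "J k \<le> (\<Sum>t\<in>T. NI ((1 - \<epsilon>) * A t) \<delta> k) + C ^ k" for k
    unfolding J_def by (rule J_upper) simp
  have lo: "(\<Sum>t\<in>T. NI ((1 + \<epsilon>) * A t) \<delta> k) - C ^ k \<le> J k" for k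
    unfolding J_def
  proof (rule J_lower[of T "\<lambda>t. (1 + \<epsilon>) * A t"])
    fix t assume t: "t \<in> T"
    show "(1 + \<epsilon>) * A t > 0" using Apos[OF t] e by simp
    show "(1 + \<epsilon>) * A t * \<delta> \<le> 1" using d(4) t Apos[OF t] e
      by (auto simp: pos_le_divide_eq mult.commute)
    show "g x \<le> (1 + \<epsilon>) * A t * \<bar>x - t\<bar>" if "0 < \<bar>x - t\<bar>" "\<bar>x - t\<bar> \<le> \<delta>" for x
      using bounds[OF t that] by simp
  qed simp
  define lo where "lo k = ((\<Sum>t\<in>T. NI ((1 + \<epsilon>) * A t) \<delta> k) - C ^ k) / fact k" for k
  define up where "up k = ((\<Sum>t\<in>T. NI ((1 - \<epsilon>) * A t) \<delta> k) + C ^ k) / fact k" for k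
  have "lo \<longlonglongrightarrow> (\<Sum>t\<in>T. 2 / ((1 + \<epsilon>) * A t)) - 0"
  proof -
    have eq: "lo = (\<lambda>k. (\<Sum>t\<in>T. NI ((1 + \<epsilon>) * A t) \<delta> k / fact k) - C ^ k / fact k)"
      by (rule ext) (simp add: lo_def diff_divide_distrib sum_divide_distrib)
    have "(\<lambda>k. (\<Sum>t\<in>T. NI ((1 + \<epsilon>) * A t) \<delta> k / fact k) - C ^ k / fact k) \<longlonglongrightarrow> (\<Sum>t\<in>T. 2 / ((1 + \<epsilon>) * A t)) - 0"
      by (intro tendsto_diff tendsto_sum NI_lim pow_fact_lim d(1)) (use Apos e in auto)
    then show ?thesis unfolding eq .
  qed
  moreover have "(\<Sum>t\<in>T. 2 / ((1 + \<epsilon>) * A t)) = (\<Sum>t\<in>T. 2 / A t) / (1 + \<epsilon>)"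
    by (simp add: sum_divide_distrib mult.commute)
  ultimately have lol: "lo \<longlonglongrightarrow> (\<Sum>t\<in>T. 2 / A t) / (1 + \<epsilon>)" by simp
  have "up \<longlonglongrightarrow> (\<Sum>t\<in>T. 2 / ((1 - \<epsilon>) * A t)) + 0"
  proof -
    have eq: "up = (\<lambda>k. (\<Sum>t\<in>T. NI ((1 - \<epsilon>) * A t) \<delta> k / fact k) + C ^ k / fact k)"
      by (rule ext) (simp add: up_def add_divide_distrib sum_divide_distrib)
    have "(\<lambda>k. (\<Sum>t\<in>T. NI ((1 - \<epsilon>) * A t) \<delta> k / fact k) + C ^ k / fact k) \<longlonglongrightarrow> (\<Sum>t\<in>T. 2 / ((1 - \<epsilon>) * A t)) + 0"
      by (intro tendsto_add tendsto_sum NI_lim pow_fact_lim d(1)) (use Apos e in auto)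
    then show ?thesis unfolding eq .
  qed
  moreover have "(\<Sum>t\<in>T. 2 / ((1 - \<epsilon>) * A t)) = (\<Sum>t\<in>T. 2 / A t) / (1 - \<epsilon>)"
    by (simp add: sum_divide_distrib mult.commute)
  ultimately have upl: "up \<longlonglongrightarrow> (\<Sum>t\<in>T. 2 / A t) / (1 - \<epsilon>)" by simp
  have "lo k \<le> J k / fact k \<and> J k / fact k \<le> up k" for k
    using lo[of k] up[of k] unfolding lo_def up_def by (auto intro: divide_right_mono)
  then show "\<exists>lo up. lo \<longlonglongrightarrow> (\<Sum>t\<in>T. 2 / A t) / (1 + \<epsilon>) \<and> up \<longlonglongrightarrow> (\<Sum>t\<in>T. 2 / A t) / (1 - \<epsilon>) \<and>
      (\<forall>k. lo k \<le> integral {s..s + 1} (\<lambda>x. (- ln (g x)) ^ k) / fact k \<and> integral {s..s + 1} (\<lambda>x. (- ln (g x)) ^ k) / fact k \<le> up k)"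
    using lol upl unfolding J_def by blast
qed

lemma diverge:
  assumes t0: "t0 \<in> T" "A t0 = 0"
  shows "filterlim (\<lambda>k. integral {s..s+1} (\<lambda>x. (- ln (g x)) ^ k) / fact k) at_top sequentially"
  unfolding filterlim_at_top
proof
  fix Z :: real
  define M where "M = \<bar>Z\<bar> + 1"
  have M: "M > 0" "Z < 2 * M" by (auto simp: M_def)
  define \<eta> where "\<eta> = 1 / M"
  have eta: "\<eta> > 0" using M by (simp add: \<eta>_def)
  define P where "P t x = (b t * \<bar>x - t\<bar> ^ m t \<le> g x \<and> g x \<le> 1 \<and> (t = t0 \<longrightarrow> g x / \<bar>x - t\<bar> < \<eta>))" for t x
  have evP: "eventually (P t) (at t)" if t: "t \<in> T" for t
  proof -
    have "eventually (\<lambda>x. t = t0 \<longrightarrow> g x / \<bar>x - t\<bar> < \<eta>) (at t)"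
    proof (cases "t = t0")
      case True
      have "eventually (\<lambda>x. g x / \<bar>x - t\<bar> < \<eta>) (at t)"
        using order_tendstoD(2)[OF ratio[OF t]] t0 True eta by simp
      then show ?thesis using True by eventually_elim simp
    qed simp
    with ev_le1[OF t] lowev[OF t] show ?thesis unfolding P_def by eventually_elim auto
  qed
  obtain \<delta> where d: "\<delta> > 0" "\<forall>t\<in>T. s \<le> t - \<delta> \<and> t + \<delta> \<le> s + 1" "\<forall>t\<in>T. \<forall>t'\<in>T. t \<noteq> t' \<longrightarrow> 2 * \<delta> < \<bar>t - t'\<bar>"
    "\<forall>t\<in>T. \<delta> \<le> M"
    "\<forall>t\<in>T. \<forall>x. 0 < \<bar>x - t\<bar> \<and> \<bar>x - t\<bar> \<le> \<delta> \<longrightarrow> P t x"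
    using choose_delta[OF fin evP, of s "s+1" "\<lambda>t. M"] Tin M by auto
  obtain C where "core g s T \<delta> b m C"
    using make_core[OF d(1-3), of b m] mb d(5) unfolding P_def by auto
  then interpret core g s T \<delta> b m C .
  have lo: "NI \<eta> \<delta> k - C ^ k \<le> integral {s..s+1} (\<lambda>x. (- ln (g x)) ^ k)" for k
  proof -
    have "(\<Sum>t\<in>{t0}. NI \<eta> \<delta> k) - C ^ k \<le> integral {s..s+1} (\<lambda>x. (- ln (g x)) ^ k)"
    proof (rule J_lower[of "{t0}" "\<lambda>_. \<eta>"])
      show "{t0} \<subseteq> T" using t0 by simp
      show "\<eta> > 0" by (rule eta)
      have "\<delta> \<le> M" using d(4) t0 by blast
      then show "\<eta> * \<delta> \<le> 1" using M by (simp add: \<eta>_def)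
      fix t x assume tx: "t \<in> {t0}" "0 < \<bar>x - t\<bar>" "\<bar>x - t\<bar> \<le> \<delta>"
      then have "g x / \<bar>x - t\<bar> < \<eta>" using d(5) t0 unfolding P_def by auto
      then show "g x \<le> \<eta> * \<bar>x - t\<bar>" using tx(2) by (simp add: pos_divide_less_eq less_imp_le)
    qed
    then show ?thesis by simp
  qed
  have "(\<lambda>k. NI \<eta> \<delta> k / fact k - C ^ k / fact k) \<longlonglongrightarrow> 2 / \<eta> - 0"
    by (intro tendsto_diff NI_lim pow_fact_lim eta d(1))
  moreover have "2 / \<eta> - 0 = 2 * M" using M by (simp add: \<eta>_def)
  ultimately have "eventually (\<lambda>k. Z < NI \<eta> \<delta> k / fact k - C ^ k / fact k) sequentially"
    using order_tendstoD(1) M(2) by metis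
  then show "eventually (\<lambda>k. Z \<le> integral {s..s+1} (\<lambda>x. (- ln (g x)) ^ k) / fact k) sequentially"
  proof eventually_elim
    case (elim k)
    have "NI \<eta> \<delta> k / fact k - C ^ k / fact k \<le> integral {s..s+1} (\<lambda>x. (- ln (g x)) ^ k) / fact k"
      using divide_right_mono[OF lo[of k], of "fact k"] by (simp add: diff_divide_distrib)
    then show ?case using elim by linarith
  qed
qed

end



lemma cis_shift_int: "cis (2 * pi * (x + of_int n)) = cis (2 * pi * x)"
proof -
  have "cis (2 * pi * x) * cis (2 * pi * of_int n) = cis (2 * pi * (x + of_int n))"
    unfolding cis_mult by (simp only: distrib_left)
  then have "cis (2 * pi * (x + of_int n)) = cis (2 * pi * x) * cis (2 * pi * of_int n)" by simp
  also have "cis (2 * pi * of_int n) = 1" by (rule cis_multiple_2pi) simp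
  finally show ?thesis by simp
qed

lemma cis_shift1: "cis (2 * pi * (x + 1)) = cis (2 * pi * x)"
  using cis_shift_int[of x 1] by simp

lemma cis_inj:
  assumes "cis (2 * pi * a) = cis (2 * pi * b)" "\<bar>a - b\<bar> < 1"
  shows "a = b"
proof -
  have "cis (2 * pi * (a - b)) = 1"
    using assms(1) cis_divide[of "2*pi*a" "2*pi*b"] by (simp add: right_diff_distrib)
  then have "cos (2 * pi * (a - b)) = 1" by (metis cis.sel(1) one_complex.sel(1))
  then obtain n :: int where n: "2 * pi * (a - b) = of_int n * 2 * pi" unfolding cos_one_2pi_int by blast
  then have "a - b = n" by simp
  with assms(2) have "\<bar>real_of_int n\<bar> < 1" by simp
  then have "n = 0" by linarith
  with \<open>a - b = n\<close> show ?thesis by simp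
qed

lemma circle_param:
  assumes z: "cmod z = 1"
  shows "\<exists>t. s \<le> t \<and> t < s + 1 \<and> cis (2 * pi * t) = z"
proof -
  define u where "u = Arg z / (2 * pi)"
  have z0: "z \<noteq> 0" using z by auto
  have cu: "cis (2 * pi * u) = z"
    using cis_Arg[OF z0] z by (simp add: u_def sgn_div_norm)
  define t where "t = u + of_int (- \<lfloor>u - s\<rfloor>)"
  have "cis (2 * pi * t) = z" unfolding t_def cis_shift_int cu ..
  moreover have "s \<le> t \<and> t < s + 1" unfolding t_def by linarith
  ultimately show ?thesis by blast
qed

lemma exists_good_s:
  fixes Q :: "complex poly"
  assumes Q: "Q \<noteq> 0"
  shows "\<exists>s. 0 \<le> s \<and> s \<le> 1 \<and> poly Q (cis (2 * pi * s)) \<noteq> 0"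
proof (rule ccontr)
  assume "\<not> ?thesis"
  then have all: "\<And>s. 0 \<le> s \<Longrightarrow> s \<le> 1 \<Longrightarrow> poly Q (cis (2 * pi * s)) = 0" by auto
  have "inj_on (\<lambda>s. cis (2 * pi * s)) {0..<1}"
    by (rule inj_onI) (rule cis_inj, auto)
  moreover have "(\<lambda>s. cis (2 * pi * s)) ` {0..<1} \<subseteq> {x. poly Q x = 0}" using all by auto
  ultimately have "finite {0..<(1::real)}"
    using poly_roots_finite[OF Q] finite_subset inj_on_finite by blast
  then show False using infinite_Ico[of 0 "1::real"] by simp
qed

lemma cis_exp: "cis (2 * pi * x) = exp (2 * pi * \<i> * complex_of_real x)"
  by (simp add: cis_conv_exp mult_ac)

lemma vd_circ:
  assumes F: "\<And>z. (F has_field_derivative F' z) (at z)"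
  shows "((\<lambda>x. F (cis (2 * pi * x))) has_vector_derivative (F' (cis (2 * pi * t)) * (2 * pi * \<i> * cis (2 * pi * t)))) (at t)"
proof -
  have "((\<lambda>w. F (exp (2 * pi * \<i> * w))) has_field_derivative
        F' (exp (2 * pi * \<i> * complex_of_real t)) * (exp (2 * pi * \<i> * complex_of_real t) * (2 * pi * \<i>))) (at (of_real t))"
    by (rule DERIV_chain2[OF F]) (auto intro!: derivative_eq_intros)
  from has_vector_derivative_real_field[OF this, of UNIV]
  have "((\<lambda>x. F (cis (2 * pi * x))) has_vector_derivative F' (cis (2*pi*t)) * (cis (2*pi*t) * (2 * pi * \<i>))) (at t)"
    unfolding cis_exp[symmetric] by simp
  then show ?thesis by (simp add: mult_ac)
qed

lemma ratio_circ:
  assumes F: "\<And>z. (F has_field_derivative F' z) (at z)" and z: "F (cis (2 * pi * t)) = 0"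
  shows "((\<lambda>x. cmod (F (cis (2 * pi * x))) / \<bar>x - t\<bar>) \<longlongrightarrow> 2 * pi * cmod (F' (cis (2 * pi * t)))) (at t)"
proof -
  have "((\<lambda>x. cmod (F (cis (2 * pi * x))) / \<bar>x - t\<bar>) \<longlongrightarrow> cmod (F' (cis (2 * pi * t)) * (2 * pi * \<i> * cis (2 * pi * t)))) (at t)"
    by (rule ratio_lim[OF vd_circ[OF F]]) (use z in simp)
  moreover have "cmod (F' (cis (2 * pi * t)) * (2 * pi * \<i> * cis (2 * pi * t))) = 2 * pi * cmod (F' (cis (2 * pi * t)))"
    by (simp add: norm_mult)
  ultimately show ?thesis by simp
qed

definition gQ :: "complex poly \<Rightarrow> real \<Rightarrow> real" where
  "gQ Q x = cmod (poly Q (cis (2 * pi * x)))"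

lemma gQ_cont: "continuous_on UNIV (gQ Q)"
  unfolding gQ_def by (intro continuous_intros)

lemma gQ_ratio:
  assumes "poly Q (cis (2 * pi * t)) = 0"
  shows "((\<lambda>x. gQ Q x / \<bar>x - t\<bar>) \<longlongrightarrow> 2 * pi * cmod (poly (pderiv Q) (cis (2 * pi * t)))) (at t)"
  unfolding gQ_def by (rule ratio_circ[OF poly_DERIV assms])

lemma gQ_lower:
  assumes Q: "Q \<noteq> 0" and z: "poly Q (cis (2 * pi * t)) = 0"
  shows "\<exists>m b. m \<ge> 1 \<and> b > 0 \<and> eventually (\<lambda>x. b * \<bar>x - t\<bar> ^ m \<le> gQ Q x) (at t)"
proof -
  define z0 where "z0 = cis (2 * pi * t)"
  define m where "m = order z0 Q"
  obtain q where q: "Q = [:- z0, 1:] ^ m * q" "\<not> [:- z0, 1:] dvd q"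
    using order_decomp[OF Q, of z0] unfolding m_def by blast
  have m1: "m \<ge> 1" using order_root[of Q z0] Q z unfolding m_def z0_def by simp
  have qz: "poly q z0 \<noteq> 0" using q(2) poly_eq_0_iff_dvd by blast
  define c where "c = cmod (poly q z0)"
  have c: "c > 0" using qz by (simp add: c_def)
  have gq: "gQ Q x = cmod (cis (2 * pi * x) - z0) ^ m * cmod (poly q (cis (2 * pi * x)))" for x
    unfolding gQ_def by (subst q(1)) (simp add: norm_mult norm_power)
  have lin: "((\<lambda>x. cmod (cis (2 * pi * x) - z0) / \<bar>x - t\<bar>) \<longlongrightarrow> 2 * pi * cmod (1::complex)) (at t)"
    by (rule ratio_circ[where F="\<lambda>z. z - z0"]) (auto intro!: derivative_eq_intros simp: z0_def)
  then have ev1: "eventually (\<lambda>x. pi < cmod (cis (2 * pi * x) - z0) / \<bar>x - t\<bar>) (at t)"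
    by (rule order_tendstoD(1)) simp
  have "((\<lambda>x. cmod (poly q (cis (2 * pi * x)))) \<longlongrightarrow> c) (at t)"
  proof -
    have "continuous_on UNIV (\<lambda>x. cmod (poly q (cis (2 * pi * x))))" by (intro continuous_intros)
    then have "isCont (\<lambda>x. cmod (poly q (cis (2 * pi * x)))) t" by (simp add: continuous_on_eq_continuous_at)
    then show ?thesis by (simp add: isCont_def c_def z0_def)
  qed
  then have ev2: "eventually (\<lambda>x. c / 2 < cmod (poly q (cis (2 * pi * x)))) (at t)"
    by (rule order_tendstoD(1)) (use c in simp)
  have "eventually (\<lambda>x. pi ^ m * (c / 2) * \<bar>x - t\<bar> ^ m \<le> gQ Q x) (at t)"
    using ev1 ev2 eventually_at_filter[THEN iffD1, OF always_eventually[of "\<lambda>x. True"], of t UNIV]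
  proof -
    have ne: "eventually (\<lambda>x. x \<noteq> t) (at t)" by (simp add: eventually_at_filter)
    from ev1 ev2 ne show ?thesis
    proof eventually_elim
      case (elim x)
      then have p: "\<bar>x - t\<bar> > 0" by simp
      have l: "pi * \<bar>x - t\<bar> \<le> cmod (cis (2 * pi * x) - z0)"
        using elim(1) p by (simp add: pos_less_divide_eq less_imp_le)
      have "pi ^ m * (c / 2) * \<bar>x - t\<bar> ^ m = (pi * \<bar>x - t\<bar>) ^ m * (c / 2)"
        by (simp add: power_mult_distrib)
      also have "\<dots> \<le> cmod (cis (2 * pi * x) - z0) ^ m * cmod (poly q (cis (2 * pi * x)))"
        by (rule mult_mono[OF power_mono[OF l]]) (use elim(2) c in auto)
      finally show ?case unfolding gq .
    qed
  qed
  then show ?thesis using m1 c by (intro exI[of _ m] exI[of _ "pi ^ m * (c / 2)"]) auto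
qed



lemma neg_pow_real: "(x::real) ^ k = (-1) ^ k * (- x) ^ k"
  by (induction k) (auto simp: algebra_simps)

theorem theorem1:
  fixes Q :: "complex poly" and e :: int
  assumes "Q \<noteq> 0"
  defines "P \<equiv> laurent_eval Q e"
  defines "R \<equiv> {z. cmod z = 1 \<and> P z = 0}"
  shows "((\<exists>z\<in>R. deriv P z = 0) \<longrightarrow>
            filterlim (\<lambda>k. \<bar>higher_mahler k P\<bar> / fact k) at_top sequentially) \<and>
         ((\<forall>z\<in>R. deriv P z \<noteq> 0) \<longrightarrow>
            (\<lambda>k. \<bar>higher_mahler k P\<bar> / fact k)
              \<longlonglongrightarrow> (1 / pi) * (\<Sum>z\<in>R. 1 / cmod (deriv P z)))"
proof -
  have Q: "Q \<noteq> 0" by fact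
  obtain s where s: "0 \<le> s" "s \<le> 1" "poly Q (cis (2 * pi * s)) \<noteq> 0"
    using exists_good_s[OF Q] by blast
  define T where "T = {t. s < t \<and> t < s + 1 \<and> poly Q (cis (2 * pi * t)) = 0}"
  define A where "A t = 2 * pi * cmod (poly (pderiv Q) (cis (2 * pi * t)))" for t
  have injT: "inj_on (\<lambda>t. cis (2 * pi * t)) T"
    by (rule inj_onI) (rule cis_inj, auto simp: T_def)
  have Tfin: "finite T"
  proof (rule inj_on_finite[OF injT])
    show "(\<lambda>t. cis (2 * pi * t)) ` T \<subseteq> {x. poly Q x = 0}" by (auto simp: T_def)
  qed (rule poly_roots_finite[OF Q])
  have zeros: "gQ Q x = 0 \<longleftrightarrow> x \<in> T" if x: "x \<in> {s..s+1}" for x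
  proof -
    have s1: "poly Q (cis (2 * pi * (s + 1))) \<noteq> 0" using s(3) cis_shift1[of s] by simp
    show ?thesis
    proof (cases "x = s \<or> x = s + 1")
      case True
      then have "poly Q (cis (2 * pi * x)) \<noteq> 0" using s(3) s1 by blast
      moreover have "x \<notin> T" using True unfolding T_def by auto
      ultimately show ?thesis unfolding gQ_def by simp
    next
      case False
      then have "x \<in> T \<longleftrightarrow> poly Q (cis (2 * pi * x)) = 0" using x unfolding T_def by auto
      then show ?thesis unfolding gQ_def by simp
    qed
  qed
  have "\<forall>t\<in>T. \<exists>m b. m \<ge> 1 \<and> b > 0 \<and> eventually (\<lambda>x. b * \<bar>x - t\<bar> ^ m \<le> gQ Q x) (at t)"
    using gQ_lower[OF Q] by (auto simp: T_def)
  from bchoice[OF this] obtain mm where "\<forall>t\<in>T. \<exists>b. mm t \<ge> 1 \<and> b > 0 \<and> eventually (\<lambda>x. b * \<bar>x - t\<bar> ^ mm t \<le> gQ Q x) (at t)"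
    by (elim exE)
  from bchoice[OF this] obtain bb where mb: "\<forall>t\<in>T. mm t \<ge> 1 \<and> bb t > 0 \<and> eventually (\<lambda>x. bb t * \<bar>x - t\<bar> ^ mm t \<le> gQ Q x) (at t)"
    by (elim exE)
  interpret absdata "gQ Q" s T A bb mm
  proof
    show "continuous_on UNIV (gQ Q)" by (rule gQ_cont)
    show "\<And>x. 0 \<le> gQ Q x" by (simp add: gQ_def)
    show "finite T" by (rule Tfin)
    show "\<And>t. t \<in> T \<Longrightarrow> s < t \<and> t < s + 1" by (auto simp: T_def)
    show "\<And>x. x \<in> {s..s + 1} \<Longrightarrow> (gQ Q x = 0) = (x \<in> T)" by (rule zeros)
    show "\<And>t. t \<in> T \<Longrightarrow> 1 \<le> mm t \<and> 0 < bb t" using mb by auto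
    show "\<And>t. t \<in> T \<Longrightarrow> \<forall>\<^sub>F x in at t. bb t * \<bar>x - t\<bar> ^ mm t \<le> gQ Q x" using mb by auto
    show "\<And>t. t \<in> T \<Longrightarrow> ((\<lambda>x. gQ Q x / \<bar>x - t\<bar>) \<longlongrightarrow> A t) (at t)"
      unfolding A_def by (rule gQ_ratio) (auto simp: T_def)
  qed
  define X where "X k = integral {s..s+1} (\<lambda>x. (- ln (gQ Q x)) ^ k) / fact k" for k
  have Pabs: "cmod (P (cis y)) = cmod (poly Q (cis y))" for y
    by (simp add: P_def laurent_eval_def norm_mult norm_power_int)
  have hm: "\<bar>higher_mahler k P\<bar> / fact k = \<bar>X k\<bar>" for k
  proof -
    have "higher_mahler k P = integral {0..1} (\<lambda>t. (-1) ^ k * (- ln (gQ Q t)) ^ k)"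
      unfolding higher_mahler_def Pabs gQ_def[symmetric] by (subst neg_pow_real) (rule refl)
    also have "\<dots> = (-1) ^ k * integral {0..1} (\<lambda>t. (- ln (gQ Q t)) ^ k)"
      using integral_cmul[of "{0..1}" "(-1) ^ k" "\<lambda>t. (- ln (gQ Q t)) ^ k"] by simp
    also have "integral {0..1} (\<lambda>t. (- ln (gQ Q t)) ^ k) = integral {s..s+1} (\<lambda>t. (- ln (gQ Q t)) ^ k)"
      by (rule periodic_integral[OF _ integrable s(1,2)]) (simp add: gQ_def cis_shift1)
    finally show ?thesis by (simp add: X_def abs_mult)
  qed
  have R_eq: "R = (\<lambda>t. cis (2 * pi * t)) ` T"
  proof
    show "R \<subseteq> (\<lambda>t. cis (2 * pi * t)) ` T"
    proof
      fix z assume z: "z \<in> R"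
      then have z1: "cmod z = 1" and "P z = 0" by (auto simp: R_def)
      then have pz: "poly Q z = 0" using z1 by (auto simp: P_def laurent_eval_def)
      obtain t where t: "s \<le> t" "t < s + 1" "cis (2 * pi * t) = z" using circle_param[OF z1, of s] by blast
      have "t \<noteq> s" using t s(3) pz by auto
      then have "t \<in> T" using t pz by (auto simp: T_def)
      then show "z \<in> (\<lambda>t. cis (2 * pi * t)) ` T" using t by auto
    qed
    show "(\<lambda>t. cis (2 * pi * t)) ` T \<subseteq> R"
      by (auto simp: T_def R_def P_def laurent_eval_def)
  qed
  have dP: "cmod (deriv P (cis (2 * pi * t))) = A t / (2 * pi)" if t: "t \<in> T" for t
  proof -
    define z where "z = cis (2 * pi * t)"
    have z0: "z \<noteq> 0" and pz: "poly Q z = 0" using t by (auto simp: z_def T_def)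
    have d1: "((\<lambda>z. z powi e) has_field_derivative (of_int e * z powi (e - 1) * 1)) (at z)"
      by (rule DERIV_power_int[OF DERIV_ident]) (use z0 in simp)
    have "((\<lambda>z. z powi e * poly Q z) has_field_derivative
           (of_int e * z powi (e - 1) * 1 * poly Q z + poly (pderiv Q) z * z powi e)) (at z)"
      by (rule DERIV_mult[OF d1 poly_DERIV])
    then have "(P has_field_derivative (of_int e * z powi (e - 1) * 1 * poly Q z + poly (pderiv Q) z * z powi e)) (at z)"
      unfolding P_def laurent_eval_def[abs_def] .
    then have "deriv P z = poly (pderiv Q) z * z powi e" using pz by (simp add: DERIV_imp_deriv)
    then show ?thesis by (simp add: z_def A_def norm_mult norm_power_int)
  qed
  have Aeq: "A t = 0 \<longleftrightarrow> deriv P (cis (2 * pi * t)) = 0" if "t \<in> T" for t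
    using dP[OF that] by auto
  show ?thesis
  proof (intro conjI impI)
    assume "\<exists>z\<in>R. deriv P z = 0"
    then obtain t0 where t0: "t0 \<in> T" "A t0 = 0" unfolding R_eq using Aeq by auto
    have "filterlim X at_top sequentially" unfolding X_def by (rule diverge[OF t0])
    then show "filterlim (\<lambda>k. \<bar>higher_mahler k P\<bar> / fact k) at_top sequentially"
    proof -
      have "\<forall>k. X k \<le> \<bar>X k\<bar>" by (intro allI abs_ge_self)
      then have "eventually (\<lambda>k. X k \<le> \<bar>X k\<bar>) sequentially" by (rule always_eventually)
      from filterlim_at_top_mono[OF \<open>filterlim X at_top sequentially\<close> this]
      show ?thesis unfolding hm .
    qed
  next
    assume nz: "\<forall>z\<in>R. deriv P z \<noteq> 0"
    have Apos: "A t > 0" if "t \<in> T" for t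
      using nz Aeq[OF that] that unfolding R_eq by (auto simp: A_def)
    have "X \<longlonglongrightarrow> (\<Sum>t\<in>T. 2 / A t)" unfolding X_def by (rule conv[OF Apos])
    then have "(\<lambda>k. \<bar>X k\<bar>) \<longlonglongrightarrow> \<bar>\<Sum>t\<in>T. 2 / A t\<bar>" by (rule tendsto_rabs)
    moreover have "\<bar>\<Sum>t\<in>T. 2 / A t\<bar> = (1 / pi) * (\<Sum>z\<in>R. 1 / cmod (deriv P z))"
    proof -
      have "(\<Sum>z\<in>R. 1 / cmod (deriv P z)) = (\<Sum>t\<in>T. 1 / cmod (deriv P (cis (2 * pi * t))))"
        unfolding R_eq by (rule sum.reindex[OF injT, unfolded comp_def])
      also have "\<dots> = (\<Sum>t\<in>T. 2 * pi / A t)" by (rule sum.cong) (auto simp: dP)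
      finally have "(1 / pi) * (\<Sum>z\<in>R. 1 / cmod (deriv P z)) = (\<Sum>t\<in>T. 2 / A t)"
        by (simp add: sum_distrib_left)
      moreover have "(\<Sum>t\<in>T. 2 / A t) \<ge> 0" using Apos by (intro sum_nonneg) (simp add: less_imp_le)
      ultimately show ?thesis by simp
    qed
    ultimately show "(\<lambda>k. \<bar>higher_mahler k P\<bar> / fact k) \<longlonglongrightarrow> (1 / pi) * (\<Sum>z\<in>R. 1 / cmod (deriv P z))"
      unfolding hm by simp
  qed
qed


end
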